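(* Let $M$ be a modular lattice of finite length and $n\ge 1$. The following are equivalent: (i) $M$ has breadth at most $n$; (ii) no complemented modular lattice of length $n+1$ (i.e. no subspace lattice of a possibly reducible projective geometry of dimension $n$) embeds into $M$ as a sublattice; (iii) for every $x\in S(M)$, the interval $[x,x^*]$ has length at most $n$ (i.e. is the subspace lattice of a possibly reducible projective geometry of dimension at most $n-1$).
   Context: $M$ has least element $0$ and greatest element $1$. For $a\in M$: $a^*$ is the join of all elements covering $a$ if $a<1$, and $1^*=1$. An interval $[a,b]$ is \emph{atomistic} if every element of it is a join of atoms of $[a,b]$. The \emph{skeleton} $S(M)$ is the set of least elements of the maximal (under inclusion) atomistic intervals of $M$. The \emph{breadth} of a lattice $K$ is the supremum of all $m$ for which there is a map $\varphi$ from the Boolean lattice $\mathbf{2}^m$ into $K$ with $\varphi(a)\le\varphi(b)\iff a\le b$. The length of a lattice is the supremum of $|C|-1$ over its chains $C$. *)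

theory Defs
  imports Main
begin

definition modular_lattice :: "'a::lattice itself \<Rightarrow> bool" where
  "modular_lattice _ \<longleftrightarrow> (\<forall>x y z::'a. x \<le> z \<longrightarrow> sup x (inf y z) = inf (sup x y) z)"

definition is_chain :: "'a::order set \<Rightarrow> bool" where
  "is_chain C \<longleftrightarrow> (\<forall>x\<in>C. \<forall>y\<in>C. x \<le> y \<or> y \<le> x)"

definition length_le :: "'a::order set \<Rightarrow> nat \<Rightarrow> bool" where
  "length_le S k \<longleftrightarrow> (\<forall>C\<subseteq>S. is_chain C \<longrightarrow> finite C \<and> card C \<le> k + 1)"

definition length_eq :: "'a::order set \<Rightarrow> nat \<Rightarrow> bool" where
  "length_eq S k \<longleftrightarrow> length_le S k \<and> (\<exists>C\<subseteq>S. is_chain C \<and> finite C \<and> card C = k + 1)"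

definition finite_length :: "'a::order itself \<Rightarrow> bool" where
  "finite_length _ \<longleftrightarrow> (\<exists>N. length_le (UNIV :: 'a set) N)"

definition breadth_le :: "'a::order itself \<Rightarrow> nat \<Rightarrow> bool" where
  "breadth_le _ n \<longleftrightarrow>
     (\<forall>m (\<phi>::nat set \<Rightarrow> 'a).
        (\<forall>A\<in>Pow {..<m}. \<forall>B\<in>Pow {..<m}. \<phi> A \<le> \<phi> B \<longleftrightarrow> A \<subseteq> B) \<longrightarrow> m \<le> n)"

definition is_lub_in :: "'a::order set \<Rightarrow> 'a set \<Rightarrow> 'a \<Rightarrow> bool" where
  "is_lub_in S A x \<longleftrightarrow> x \<in> S \<and> (\<forall>a\<in>A. a \<le> x) \<and> (\<forall>y\<in>S. (\<forall>a\<in>A. a \<le> y) \<longrightarrow> x \<le> y)"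

definition covers :: "'a::order \<Rightarrow> 'a \<Rightarrow> bool" where
  "covers a b \<longleftrightarrow> a < b \<and> \<not> (\<exists>c. a < c \<and> c < b)"

definition star :: "'a::bounded_lattice \<Rightarrow> 'a" where
  "star a = (if a = top then top else (THE s. is_lub_in UNIV {b. covers a b} s))"

definition interval_atoms :: "'a::order \<Rightarrow> 'a \<Rightarrow> 'a set" where
  "interval_atoms a b = {c. covers a c \<and> c \<le> b}"

definition atomistic :: "'a::order \<Rightarrow> 'a \<Rightarrow> bool" where
  "atomistic a b \<longleftrightarrow> a \<le> b \<and>
     (\<forall>x\<in>{a..b}. \<exists>A\<subseteq>interval_atoms a b. is_lub_in {a..b} A x)"

definition max_atomistic :: "'a::order \<Rightarrow> 'a \<Rightarrow> bool" where
  "max_atomistic a b \<longleftrightarrow> atomistic a b \<and>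
     \<not> (\<exists>c d. atomistic c d \<and> {a..b} \<subset> {c..d})"

definition skeleton :: "'a::order set" where
  "skeleton = {a. \<exists>b. max_atomistic a b}"

text \<open>A sublattice of M (nonempty, closed under meet and join) which, with the
  induced operations, is a complemented (modular) lattice of length k.
  Modularity is inherited from M automatically.\<close>
definition compl_mod_sublattice :: "'a::lattice set \<Rightarrow> nat \<Rightarrow> bool" where
  "compl_mod_sublattice S k \<longleftrightarrow>
     S \<noteq> {} \<and> (\<forall>x\<in>S. \<forall>y\<in>S. inf x y \<in> S \<and> sup x y \<in> S) \<and>
     (\<forall>x\<in>S. \<forall>y\<in>S. \<forall>z\<in>S. x \<le> z \<longrightarrow> sup x (inf y z) = inf (sup x y) z) \<and>
     (\<exists>z\<in>S. \<exists>u\<in>S. (\<forall>x\<in>S. z \<le> x \<and> x \<le> u) \<and>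
        (\<forall>x\<in>S. \<exists>y\<in>S. inf x y = z \<and> sup x y = u)) \<and>
     length_eq S k"

end

theory Submission
  imports Defs
begin


definition J :: "'a::lattice \<Rightarrow> ('i \<Rightarrow> 'a) \<Rightarrow> 'i set \<Rightarrow> 'a" where
  "J z c A = Finite_Set.fold (\<lambda>i acc. sup (c i) acc) z A"

lemma J_cfi: "comp_fun_idem (\<lambda>i (acc::'a::lattice). sup (c i) acc)"
  by unfold_locales (auto simp: fun_eq_iff sup_left_commute)

lemma J_empty[simp]: "J z c {} = z"
  by (simp add: J_def)

lemma J_insert: "finite A \<Longrightarrow> J z c (insert i A) = sup (c i) (J z c A)"
proof -
  interpret comp_fun_idem "\<lambda>i acc. sup (c i) acc" by (rule J_cfi)
  assume "finite A" then show ?thesis unfolding J_def by simp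
qed

lemma J_le_iff: "finite A \<Longrightarrow> J z c A \<le> v \<longleftrightarrow> z \<le> v \<and> (\<forall>i\<in>A. c i \<le> v)"
  by (induction A rule: finite_induct) (auto simp: J_insert)

lemma J_ge_z: "finite A \<Longrightarrow> z \<le> J z c A"
  using J_le_iff by blast

lemma J_ge_c: "finite A \<Longrightarrow> i \<in> A \<Longrightarrow> c i \<le> J z c A"
  using J_le_iff by blast

lemma J_mono: "finite B \<Longrightarrow> A \<subseteq> B \<Longrightarrow> J z c A \<le> J z c B"
proof -
  assume f: "finite B" and s: "A \<subseteq> B"
  have fA: "finite A" using f s by (rule finite_subset[rotated])
  show ?thesis unfolding J_le_iff[OF fA] using J_ge_z[OF f] J_ge_c[OF f] s by blast
qed

lemma J_cong: "finite A \<Longrightarrow> (\<And>i. i \<in> A \<Longrightarrow> c i = d i) \<Longrightarrow> J z c A = J z d A"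
  by (induction A rule: finite_induct) (auto simp: J_insert)

lemma J_Un: "finite A \<Longrightarrow> finite B \<Longrightarrow> J z c (A \<union> B) = sup (J z c A) (J z c B)"
proof (rule order.antisym)
  assume f: "finite A" "finite B"
  have "z \<le> sup (J z c A) (J z c B)" using J_ge_z[OF f(1)] by (rule le_supI1)
  moreover have "\<forall>i\<in>A \<union> B. c i \<le> sup (J z c A) (J z c B)"
    using J_ge_c[OF f(1)] J_ge_c[OF f(2)] by (blast intro: le_supI1 le_supI2)
  ultimately show "J z c (A \<union> B) \<le> sup (J z c A) (J z c B)" using f
    by (simp add: J_le_iff)
  have "J z c A \<le> J z c (A \<union> B)" "J z c B \<le> J z c (A \<union> B)" using f by (simp_all add: J_mono)
  thus "sup (J z c A) (J z c B) \<le> J z c (A \<union> B)" by simp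
qed

lemma modD: "modular_lattice TYPE('a::lattice) \<Longrightarrow> (x::'a) \<le> z \<Longrightarrow> sup x (inf y z) = inf (sup x y) z"
  unfolding modular_lattice_def by blast

lemma fl_bound: "finite_length TYPE('a::order) \<Longrightarrow> \<exists>N. \<forall>C::'a set. is_chain C \<longrightarrow> finite C \<and> card C \<le> N+1"
  unfolding finite_length_def length_le_def by blast

lemma chain_subset: "is_chain C \<Longrightarrow> D \<subseteq> C \<Longrightarrow> is_chain D"
  unfolding is_chain_def by blast

lemma chain_insert: "is_chain C \<Longrightarrow> (\<forall>b\<in>C. w \<le> b \<or> b \<le> w) \<Longrightarrow> is_chain (insert w C)"
  unfolding is_chain_def by blast

lemma fl_min:
  assumes FL: "finite_length TYPE('a::order)" and ne: "(S::'a set) \<noteq> {}"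
  shows "\<exists>m\<in>S. \<forall>w\<in>S. \<not> w < m"
proof -
  obtain N where N: "\<forall>C::'a set. is_chain C \<longrightarrow> finite C \<and> card C \<le> N+1"
    using fl_bound[OF FL] by blast
  let ?P = "\<lambda>k. \<exists>C\<subseteq>S. is_chain C \<and> finite C \<and> card C = k \<and> C \<noteq> {}"
  obtain s where s: "s \<in> S" using ne by blast
  have P1: "?P 1" using s by (intro exI[of _ "{s}"]) (auto simp: is_chain_def)
  have "\<forall>y. ?P y \<longrightarrow> y \<le> N+1" using N by blast
  from Nat.ex_has_greatest_nat[OF P1 this] obtain k C where C: "C \<subseteq> S" "is_chain C" "finite C"
    "card C = k" "C \<noteq> {}" and kmax: "\<forall>y. ?P y \<longrightarrow> y \<le> k" by blast
  obtain m where m: "m \<in> C" "\<forall>b\<in>C. b \<le> m \<longrightarrow> m = b"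
    using finite_has_minimal[OF C(3) C(5)] by blast
  have "\<forall>w\<in>S. \<not> w < m"
  proof (intro ballI notI)
    fix w assume w: "w \<in> S" "w < m"
    have wC: "w \<notin> C" using m w by force
    have "\<forall>b\<in>C. w \<le> b"
    proof
      fix b assume b: "b \<in> C"
      have "b \<le> m \<or> m \<le> b" using C(2) b m(1) unfolding is_chain_def by blast
      thus "w \<le> b" using m(2) b w by (metis less_imp_le order_trans)
    qed
    hence "is_chain (insert w C)" using C(2) by (intro chain_insert) auto
    hence "?P (Suc k)" using C w wC by (intro exI[of _ "insert w C"]) auto
    hence "Suc k \<le> k" using kmax by blast
    thus False by simp
  qed
  thus ?thesis using m C by blast
qed

lemma fl_max:
  assumes FL: "finite_length TYPE('a::order)" and ne: "(S::'a set) \<noteq> {}"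
  shows "\<exists>m\<in>S. \<forall>w\<in>S. \<not> m < w"
proof -
  obtain N where N: "\<forall>C::'a set. is_chain C \<longrightarrow> finite C \<and> card C \<le> N+1"
    using fl_bound[OF FL] by blast
  let ?P = "\<lambda>k. \<exists>C\<subseteq>S. is_chain C \<and> finite C \<and> card C = k \<and> C \<noteq> {}"
  obtain s where s: "s \<in> S" using ne by blast
  have P1: "?P 1" using s by (intro exI[of _ "{s}"]) (auto simp: is_chain_def)
  have "\<forall>y. ?P y \<longrightarrow> y \<le> N+1" using N by blast
  from Nat.ex_has_greatest_nat[OF P1 this] obtain k C where C: "C \<subseteq> S" "is_chain C" "finite C"
    "card C = k" "C \<noteq> {}" and kmax: "\<forall>y. ?P y \<longrightarrow> y \<le> k" by blast
  obtain m where m: "m \<in> C" "\<forall>b\<in>C. m \<le> b \<longrightarrow> m = b"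
    using finite_has_maximal[OF C(3) C(5)] by blast
  have "\<forall>w\<in>S. \<not> m < w"
  proof (intro ballI notI)
    fix w assume w: "w \<in> S" "m < w"
    have wC: "w \<notin> C" using m w by force
    have "\<forall>b\<in>C. b \<le> w"
    proof
      fix b assume b: "b \<in> C"
      have "b \<le> m \<or> m \<le> b" using C(2) b m(1) unfolding is_chain_def by blast
      thus "b \<le> w" using m(2) b w by (metis less_imp_le order_trans)
    qed
    hence "is_chain (insert w C)" using C(2) by (intro chain_insert) auto
    hence "?P (Suc k)" using C w wC by (intro exI[of _ "insert w C"]) auto
    hence "Suc k \<le> k" using kmax by blast
    thus False by simp
  qed
  thus ?thesis using m C by blast
qed

lemma chain_max:
  assumes "is_chain C" "finite C" "C \<noteq> {}"
  shows "\<exists>m\<in>C. \<forall>g\<in>C. g \<le> m"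
  using finite_has_maximal[OF assms(2,3)] assms(1) unfolding is_chain_def by metis

context
  fixes dummy :: "'a::bounded_lattice itself"
  assumes M: "modular_lattice TYPE('a)"
begin

lemma md: "(x::'a) \<le> z \<Longrightarrow> sup x (inf y z) = inf (sup x y) z"
  using modD[OF M] .

lemma cover_up:
  assumes "covers (inf a b) (a::'a)" shows "covers b (sup a b)"
proof -
  have ab: "inf a b < a" using assms covers_def by blast
  have "b < sup a b" using ab by (metis inf.absorb1 inf.strict_order_iff sup.cobounded2 sup.commute sup_absorb1 le_iff_inf)
  moreover have "\<not> (b < w \<and> w < sup a b)" for w
  proof
    assume w: "b < w \<and> w < sup a b"
    have "inf w a \<noteq> a" using w by (metis inf.absorb_iff2 le_sup_iff less_le_not_le sup.cobounded1 sup_commute inf_commute order.strict_implies_order)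
    moreover have "inf a b \<le> inf w a" using w by (meson inf.cobounded1 inf.cobounded2 le_inf_iff less_imp_le order_trans)
    ultimately have "inf w a = inf a b" using assms unfolding covers_def
      by (metis inf.cobounded2 order.not_eq_order_implies_strict)
    hence "sup b (inf a w) = b" by (simp add: inf_commute sup.absorb1)
    moreover have "sup b (inf a w) = inf (sup b a) w" using w md[of b w a] by (simp add: less_imp_le)
    ultimately show False using w by (metis inf.absorb2 less_imp_le sup_commute order.strict_iff_not)
  qed
  ultimately show ?thesis unfolding covers_def by blast
qed

lemma cover_down:
  assumes "covers y (sup y (b::'a))" shows "covers (inf y b) b"
proof -
  have nb: "\<not> b \<le> y" using assms unfolding covers_def by (metis sup.absorb1 order.irrefl)
  have "inf y b < b" using nb by (metis inf.cobounded2 inf.absorb_iff2 inf_commute order.not_eq_order_implies_strict)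
  moreover have "\<not> (inf y b < t \<and> t < b)" for t
  proof
    assume t: "inf y b < t \<and> t < b"
    have "sup y t \<noteq> y" using t by (metis inf.absorb_iff2 le_iff_sup le_inf_iff less_le_not_le sup_commute less_imp_le)
    moreover have "y \<le> sup y t" "sup y t \<le> sup y b" using t by (auto intro: le_supI2 less_imp_le)
    ultimately have "sup y t = sup y b" using assms unfolding covers_def by (metis order.not_eq_order_implies_strict)
    have "sup t (inf y b) = inf (sup t y) b" using md[of t b y] t by (simp add: less_imp_le)
    hence "t = inf (sup y b) b" using t \<open>sup y t = sup y b\<close>
      by (metis sup.absorb1 sup_commute less_imp_le)
    moreover have "inf (sup y b) b = b" by (simp add: inf.absorb2)
    ultimately show False using t by simp
  qed
  ultimately show ?thesis unfolding covers_def by blast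
qed

lemma indep_step:
  assumes "z \<le> (a::'a)" "z \<le> b" "inf a b = z" "inf (sup a b) c = z"
  shows "inf a (sup b c) = z"
proof -
  have "inf (sup b c) (sup a b) = sup b (inf c (sup a b))" using md[of b "sup a b" c] by simp
  also have "\<dots> = b" using assms(2,4) by (simp add: inf_commute sup_absorb1)
  moreover have "inf a (sup b c) \<le> inf (sup b c) (sup a b)"
    by (simp add: le_infI1)
  ultimately have "inf a (sup b c) \<le> b" by simp
  hence "inf a (sup b c) \<le> z" using assms(3) by (metis inf.cobounded1 le_inf_iff)
  moreover have "z \<le> inf a (sup b c)" using assms(1,2) by (simp add: le_supI1)
  ultimately show ?thesis by simp
qed

end



definition irred :: "'a::lattice \<Rightarrow> ('i \<Rightarrow> 'a) \<Rightarrow> 'i set \<Rightarrow> bool" where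
  "irred z c I \<longleftrightarrow> (\<forall>i\<in>I. \<not> c i \<le> J z c (I - {i}))"

lemma J_emb:
  assumes "finite I" "irred z c I" "A \<subseteq> I" "B \<subseteq> I"
  shows "J z c A \<le> J z c B \<longleftrightarrow> A \<subseteq> B"
proof
  assume le: "J z c A \<le> J z c B"
  show "A \<subseteq> B"
  proof
    fix i assume i: "i \<in> A"
    show "i \<in> B"
    proof (rule ccontr)
      assume "i \<notin> B"
      hence "J z c B \<le> J z c (I - {i})" using assms by (intro J_mono) auto
      moreover have "c i \<le> J z c A" using i assms finite_subset by (metis J_ge_c)
      ultimately show False using le assms(2,3) i unfolding irred_def by (meson order_trans subsetD)
    qed
  qed
next
  assume "A \<subseteq> B" thus "J z c A \<le> J z c B" using assms(1,4) by (intro J_mono) (auto intro: finite_subset)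
qed

lemma irred_not_breadth:
  assumes "irred (z::'a::bounded_lattice) c {..<Suc n}"
  shows "\<not> breadth_le TYPE('a) n"
proof -
  have "\<forall>A\<in>Pow {..<Suc n}. \<forall>B\<in>Pow {..<Suc n}. J z c A \<le> J z c B \<longleftrightarrow> A \<subseteq> B"
    using J_emb[OF _ assms] by auto
  hence emb: "\<forall>A\<in>Pow {..<Suc n}. \<forall>B\<in>Pow {..<Suc n}. J z c A \<le> J z c B \<longleftrightarrow> A \<subseteq> B" .
  show ?thesis unfolding breadth_le_def
  proof
    assume h: "\<forall>m (\<phi>::nat set \<Rightarrow> 'a). (\<forall>A\<in>Pow {..<m}. \<forall>B\<in>Pow {..<m}. \<phi> A \<le> \<phi> B \<longleftrightarrow> A \<subseteq> B) \<longrightarrow> m \<le> n"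
    have "(\<forall>A\<in>Pow {..<Suc n}. \<forall>B\<in>Pow {..<Suc n}. J z c A \<le> J z c B \<longleftrightarrow> A \<subseteq> B) \<longrightarrow> Suc n \<le> n"
      using h by blast
    hence "Suc n \<le> n" using emb by blast
    thus False by simp
  qed
qed

lemma breadth_irred:
  assumes "\<not> breadth_le TYPE('a::bounded_lattice) n"
  shows "\<exists>c. irred (bot::'a) c {..<Suc n}"
proof -
  obtain m and \<phi> :: "nat set \<Rightarrow> 'a" where
    emb: "\<forall>A\<in>Pow {..<m}. \<forall>B\<in>Pow {..<m}. \<phi> A \<le> \<phi> B \<longleftrightarrow> A \<subseteq> B" and mn: "\<not> m \<le> n"
    using assms unfolding breadth_le_def by blast
  define c where "c i = \<phi> {i}" for i
  have "irred bot c {..<Suc n}" unfolding irred_def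
  proof
    fix i assume i: "i \<in> {..<Suc n}"
    have "J bot c ({..<Suc n} - {i}) \<le> \<phi> ({..<m} - {i})"
    proof -
      have "\<forall>j\<in>{..<Suc n} - {i}. c j \<le> \<phi> ({..<m} - {i})" unfolding c_def using emb mn by auto
      thus ?thesis by (simp add: J_le_iff)
    qed
    moreover have "\<not> c i \<le> \<phi> ({..<m} - {i})" unfolding c_def using emb i mn by auto
    ultimately show "\<not> c i \<le> J bot c ({..<Suc n} - {i})" by (meson order_trans)
  qed
  thus ?thesis by blast
qed

context
  fixes dummy :: "'a::bounded_lattice itself"
  assumes M: "modular_lattice TYPE('a)" and FL: "finite_length TYPE('a)"
begin

lemma shrink:
  assumes fin: "finite I" and ir: "irred z (c::'i \<Rightarrow> 'a) I"
  shows "\<exists>x (a::'i \<Rightarrow> 'a). (\<forall>i\<in>I. covers x (a i)) \<and> irred x a I"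
proof -
  define y where "y i = J z c (I - {i})" for i
  have "\<forall>i\<in>I. \<exists>d. d \<le> c i \<and> \<not> d \<le> y i \<and> (\<forall>w. w < d \<longrightarrow> w \<le> c i \<longrightarrow> w \<le> y i)"
  proof
    fix i assume i: "i \<in> I"
    have "{w. w \<le> c i \<and> \<not> w \<le> y i} \<noteq> {}" using ir i unfolding irred_def y_def by auto
    from fl_min[OF FL this] show "\<exists>d. d \<le> c i \<and> \<not> d \<le> y i \<and> (\<forall>w. w < d \<longrightarrow> w \<le> c i \<longrightarrow> w \<le> y i)"
      by blast
  qed
  then obtain d where d: "\<And>i. i \<in> I \<Longrightarrow> d i \<le> c i \<and> \<not> d i \<le> y i \<and> (\<forall>w. w < d i \<longrightarrow> w \<le> c i \<longrightarrow> w \<le> y i)"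
    by metis
  define e where "e i = inf (d i) (y i)" for i
  define x where "x = J z e I"
  define a where "a i = sup x (d i)" for i
  have cy: "c j \<le> y i" if "i \<in> I" "j \<in> I" "j \<noteq> i" for i j
    unfolding y_def using that fin by (intro J_ge_c) auto
  have xy: "x \<le> y i" if i: "i \<in> I" for i
    unfolding x_def
  proof (subst J_le_iff[OF fin], intro conjI ballI)
    show "z \<le> y i" unfolding y_def using fin by (intro J_ge_z) auto
    fix j assume j: "j \<in> I"
    show "e j \<le> y i"
    proof (cases "j = i")
      case True thus ?thesis unfolding e_def by simp
    next
      case False
      have "e j \<le> c j" unfolding e_def using d[OF j] by (meson inf.coboundedI1)
      thus ?thesis using cy[OF i j False] by (meson order_trans)
    qed
  qed
  have cov: "covers (e i) (d i)" if i: "i \<in> I" for i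
    unfolding covers_def
  proof
    show "e i < d i" unfolding e_def using d[OF i]
      by (metis inf.absorb_iff1 inf.cobounded1 inf.cobounded2 order.not_eq_order_implies_strict)
    show "\<not> (\<exists>w. e i < w \<and> w < d i)"
    proof
      assume "\<exists>w. e i < w \<and> w < d i"
      then obtain w where w: "e i < w" "w < d i" by blast
      have "w \<le> y i" using d[OF i] w by (meson order_trans less_imp_le)
      hence "w \<le> e i" unfolding e_def using w by (simp add: less_imp_le)
      thus False using w by simp
    qed
  qed
  have dx: "inf (d i) x = e i" if i: "i \<in> I" for i
  proof (rule order.antisym)
    show "inf (d i) x \<le> e i" unfolding e_def using xy[OF i] by (meson inf_mono order_refl)
    have "e i \<le> x" unfolding x_def using fin i by (rule J_ge_c)
    thus "e i \<le> inf (d i) x" unfolding e_def by simp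
  qed
  have covs: "\<forall>i\<in>I. covers x (a i)"
    using cover_up[OF M] cov dx unfolding a_def by (metis sup_commute)
  have "irred x a I" unfolding irred_def
  proof
    fix i assume i: "i \<in> I"
    have "J x a (I - {i}) \<le> y i"
    proof (subst J_le_iff, use fin in simp, intro conjI ballI)
      show "x \<le> y i" by (rule xy[OF i])
      fix j assume j: "j \<in> I - {i}"
      have jI: "j \<in> I" "j \<noteq> i" using j by auto
      have "d j \<le> c j" using d[OF jI(1)] by blast
      hence "d j \<le> y i" using cy[OF i jI] by (rule order_trans)
      thus "a j \<le> y i" unfolding a_def using xy[OF i] by simp
    qed
    moreover have "d i \<le> a i" unfolding a_def by simp
    ultimately show "\<not> a i \<le> J x a (I - {i})" using d[OF i] by (meson order_trans)
  qed
  thus ?thesis using covs by blast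
qed

end



lemma cover_meet:
  assumes "covers x (a::'a::lattice)" "x \<le> t" "\<not> a \<le> t"
  shows "inf a t = x"
proof -
  have "x \<le> inf a t" using assms unfolding covers_def by (simp add: less_imp_le)
  moreover have "inf a t \<noteq> a" using assms(3) by (metis inf.absorb_iff1)
  ultimately show ?thesis using assms(1) unfolding covers_def
    by (metis inf.cobounded1 order.not_eq_order_implies_strict)
qed

context
  fixes dummy :: "'a::bounded_lattice itself"
  assumes M: "modular_lattice TYPE('a)"
begin

lemma J_meet:
  assumes fin: "finite I" and cov: "\<forall>i\<in>I. covers x ((a::'i \<Rightarrow> 'a) i)" and ir: "irred x a I"
    and AI: "A \<subseteq> I" and BI: "B \<subseteq> I"
  shows "inf (J x a A) (J x a B) = J x a (A \<inter> B)"
proof -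
  have fA: "finite A" using AI fin finite_subset by blast
  have fB: "finite B" using BI fin finite_subset by blast
  from fA AI show ?thesis
  proof (induction A rule: finite_induct)
    case empty
    then show ?case using J_ge_z[OF fB, of x a] by (simp add: inf.absorb1)
  next
    case (insert i A0)
    have IH: "inf (J x a A0) (J x a B) = J x a (A0 \<inter> B)" using insert by blast
    have JA: "J x a (insert i A0) = sup (a i) (J x a A0)" using insert(1) by (rule J_insert)
    show ?case
    proof (cases "i \<in> B")
      case True
      have aiB: "a i \<le> J x a B" using fB True by (rule J_ge_c)
      have "inf (J x a (insert i A0)) (J x a B) = sup (a i) (inf (J x a A0) (J x a B))"
        unfolding JA using md[OF M aiB, of "J x a A0"] by simp
      also have "\<dots> = J x a (insert i (A0 \<inter> B))" using IH insert(1) by (simp add: J_insert)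
      also have "insert i (A0 \<inter> B) = insert i A0 \<inter> B" using True by blast
      finally show ?thesis .
    next
      case False
      define G where "G = J x a (A0 \<union> B)"
      have iI: "i \<in> I" using insert by blast
      have "G \<le> J x a (I - {i})" unfolding G_def using fin insert False BI by (intro J_mono) auto
      hence nG: "\<not> a i \<le> G" using ir iI unfolding irred_def by (meson order_trans)
      have xG: "x \<le> G" unfolding G_def using insert(1) fB by (intro J_ge_z) simp
      have aG: "inf (a i) G = x" using cover_meet[OF _ xG nG] cov iI by blast
      have A0G: "J x a A0 \<le> G" unfolding G_def using insert(1) fB by (intro J_mono) auto
      have BG: "J x a B \<le> G" unfolding G_def using insert(1) fB by (intro J_mono) auto
      have "sup (J x a A0) (inf (a i) G) = inf (sup (J x a A0) (a i)) G" by (rule md[OF M A0G])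
      moreover have "sup (J x a A0) (inf (a i) G) = J x a A0"
        unfolding aG using J_ge_z[OF insert(1), of x a] by (simp add: sup.absorb1)
      ultimately have "inf (J x a (insert i A0)) G = J x a A0"
        unfolding JA by (simp add: sup_commute)
      hence "inf (J x a (insert i A0)) (J x a B) = inf (J x a A0) (J x a B)" using BG
        by (metis inf.absorb2 inf.assoc)
      also have "\<dots> = J x a (insert i A0 \<inter> B)" using IH False by simp
      finally show ?thesis .
    qed
  qed
qed

lemma J_compl:
  assumes fin: "finite I" and cov: "\<forall>i\<in>I. covers x ((a::'i \<Rightarrow> 'a) i)"
    and v: "x \<le> v" "v \<le> J x a I"
  shows "\<exists>c. x \<le> c \<and> c \<le> J x a I \<and> inf c v = x \<and> sup c v = J x a I"
proof -
  define KK where "KK = {K. K \<subseteq> I \<and> inf v (J x a K) = x}"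
  have "{} \<in> KK" unfolding KK_def using v by (simp add: inf.absorb2)
  moreover have "finite KK"
  proof (rule finite_subset)
    show "KK \<subseteq> Pow I" unfolding KK_def by auto
    show "finite (Pow I)" using fin by simp
  qed
  ultimately obtain K where K: "K \<in> KK" "\<forall>K'\<in>KK. K \<subseteq> K' \<longrightarrow> K = K'"
    using finite_has_maximal by blast
  have KI: "K \<subseteq> I" and vK: "inf v (J x a K) = x" using K unfolding KK_def by auto
  have fK: "finite K" using KI fin finite_subset by blast
  define c where "c = J x a K"
  have xc: "x \<le> c" unfolding c_def using fK by (rule J_ge_z)
  have cI: "c \<le> J x a I" unfolding c_def using fin KI by (rule J_mono)
  have ai: "a i \<le> sup v c" if i: "i \<in> I" for i
  proof (rule ccontr)
    assume na: "\<not> a i \<le> sup v c"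
    have iK: "i \<notin> K" using na fK unfolding c_def by (meson J_ge_c le_supI2)
    have xt: "x \<le> sup v c" using v by (simp add: le_supI1)
    have "inf (a i) (sup v c) = x" using cover_meet[OF _ xt na] cov i by blast
    hence "inf v (sup c (a i)) = x"
      using indep_step[OF M v(1) xc] vK unfolding c_def by (simp add: inf_commute)
    hence "insert i K \<in> KK" unfolding KK_def using KI i fK c_def
      by (simp add: J_insert sup_commute)
    thus False using K(2) iK by blast
  qed
  have "x \<le> sup c v" using v(1) by (simp add: le_supI2)
  hence s1: "J x a I \<le> sup c v" using fin ai by (simp add: J_le_iff sup_commute)
  have s2: "sup c v \<le> J x a I" using v cI by simp
  have "sup c v = J x a I" using order.antisym[OF s2 s1] .
  thus ?thesis using xc cI vK unfolding c_def by (metis inf_commute)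
qed

lemma J_atomistic:
  assumes fin: "finite I" and cov: "\<forall>i\<in>I. covers x ((a::'i \<Rightarrow> 'a) i)"
  shows "atomistic x (J x a I)"
  using fin cov
proof (induction I rule: finite_induct)
  case empty
  have "\<forall>w\<in>{x..x}. is_lub_in {x..x} {} w" unfolding is_lub_in_def by auto
  thus ?case unfolding atomistic_def by force
next
  case (insert k I0)
  define y where "y = J x a I0"
  define y' where "y' = J x a (insert k I0)"
  have IH: "atomistic x y" unfolding y_def using insert by simp
  have cov0: "\<forall>i\<in>I0. covers x (a i)" using insert by simp
  have covk: "covers x (a k)" using insert by simp
  have yy': "y' = sup (a k) y" unfolding y'_def y_def using insert(1) by (rule J_insert)
  have xy: "x \<le> y" unfolding y_def using insert(1) by (rule J_ge_z)
  have yley': "y \<le> y'" using yy' by simp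
  show ?case
  proof (cases "a k \<le> y")
    case True
    thus ?thesis using IH yy' unfolding y'_def[symmetric] by (simp add: sup.absorb2)
  next
    case False
    have aky: "inf (a k) y = x" using cover_meet[OF covk xy False] .
    have ycov: "covers y y'" unfolding yy' using cover_up[OF M, of "a k" y] aky covk by simp
    have xy': "x \<le> y'" using xy yley' by simp
    show ?thesis unfolding y'_def[symmetric] atomistic_def
    proof (intro conjI ballI)
      show "x \<le> y'" by (rule xy')
      fix w assume w: "w \<in> {x..y'}"
      show "\<exists>A\<subseteq>interval_atoms x y'. is_lub_in {x..y'} A w"
      proof (cases "w \<le> y")
        case True
        have "w \<in> {x..y}" using True w by auto
        then obtain A where A: "A \<subseteq> interval_atoms x y" "is_lub_in {x..y} A w"
          using IH unfolding atomistic_def by blast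
        have "A \<subseteq> interval_atoms x y'" using A(1) yley' unfolding interval_atoms_def by auto
        moreover have "is_lub_in {x..y'} A w"
          unfolding is_lub_in_def
        proof (intro conjI ballI impI)
          show "w \<in> {x..y'}" by (rule w)
          fix a' assume "a' \<in> A" thus "a' \<le> w" using A(2) unfolding is_lub_in_def by blast
        next
          fix u assume u: "u \<in> {x..y'}" "\<forall>a'\<in>A. a' \<le> u"
          have "inf u y \<in> {x..y}" using u xy by auto
          moreover have "\<forall>a'\<in>A. a' \<le> inf u y" using u A(1) unfolding interval_atoms_def by auto
          ultimately have "w \<le> inf u y" using A(2) unfolding is_lub_in_def by blast
          thus "w \<le> u" by simp
        qed
        ultimately show ?thesis by blast
      next
        case False
        define v where "v = inf w y"
        have vxy: "v \<in> {x..y}" unfolding v_def using w xy by auto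
        then obtain A where A: "A \<subseteq> interval_atoms x y" "is_lub_in {x..y} A v"
          using IH unfolding atomistic_def by blast
        obtain c where c: "x \<le> c" "c \<le> y" "inf c v = x" "sup c v = y"
          using J_compl[OF insert(1) cov0, of v] vxy unfolding y_def by auto
        define b where "b = inf w (sup c (a k))"
        have h1: "inf (sup c (a k)) y = c" using md[OF M c(2), of "a k"] aky c(1)
          by (simp add: sup.absorb1)
        have h2: "inf y b = x"
        proof -
          have "inf y b = inf w (inf (sup c (a k)) y)" unfolding b_def by (simp add: inf_aci)
          also have "\<dots> = inf w c" using h1 by simp
          also have "\<dots> = inf c v" unfolding v_def using c(2) by (simp add: inf_aci inf.absorb2 inf.absorb1)
            (metis inf.absorb_iff2 inf.assoc inf.commute)
          finally show ?thesis using c(3) by simp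
        qed
        have vw: "v \<le> w" unfolding v_def by simp
        have h3: "sup v b = w"
        proof -
          have "sup v (inf (sup c (a k)) w) = inf (sup v (sup c (a k))) w" by (rule md[OF M vw])
          moreover have "sup v (sup c (a k)) = y'" using c(4) yy'
            by (metis sup_assoc sup_commute)
          moreover have "inf y' w = w" using w by (simp add: inf.absorb2)
          ultimately show ?thesis unfolding b_def by (simp add: inf_commute)
        qed
        have bw: "b \<le> w" unfolding b_def by simp
        have h4: "\<not> b \<le> y" using h3 False vxy by (metis atLeastAtMost_iff le_sup_iff)
        have h5: "sup y b = y'"
        proof -
          have "y \<le> sup y b" "sup y b \<le> y'" using bw w yley' by auto
          moreover have "sup y b \<noteq> y" using h4 by (metis sup.cobounded2)
          ultimately show ?thesis using ycov unfolding covers_def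
            by (metis order.not_eq_order_implies_strict)
        qed
        have h6: "covers x b" using cover_down[OF M, of y b] ycov h5 h2 by simp
        have "insert b A \<subseteq> interval_atoms x y'"
          using A(1) h6 bw w yley' unfolding interval_atoms_def by auto
        moreover have "is_lub_in {x..y'} (insert b A) w"
          unfolding is_lub_in_def
        proof (intro conjI ballI impI)
          show "w \<in> {x..y'}" by (rule w)
          fix a' assume "a' \<in> insert b A"
          moreover have "\<forall>a\<in>A. a \<le> v" using A(2) unfolding is_lub_in_def by blast
          ultimately show "a' \<le> w" using bw vw by (auto intro: order_trans)
        next
          fix u assume u: "u \<in> {x..y'}" "\<forall>a'\<in>insert b A. a' \<le> u"
          have "inf u y \<in> {x..y}" using u xy by auto
          moreover have "\<forall>a'\<in>A. a' \<le> inf u y" using u A(1) unfolding interval_atoms_def by auto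
          ultimately have "v \<le> inf u y" using A(2) unfolding is_lub_in_def by blast
          hence "sup v b \<le> u" using u by simp
          thus "w \<le> u" using h3 by simp
        qed
        ultimately show ?thesis by blast
      qed
    qed
  qed
qed

end



context
  fixes dummy :: "'a::bounded_lattice itself"
  assumes M: "modular_lattice TYPE('a)"
begin

lemma seq_build:
  assumes zu: "(z::'a) \<le> u"
  shows "C \<subseteq> {z..u} \<Longrightarrow> is_chain C \<Longrightarrow> finite C \<Longrightarrow> card C = Suc k \<Longrightarrow>
    (\<forall>v\<in>C. \<exists>c. z \<le> c \<and> c \<le> u \<and> inf c v = z \<and> sup c v = u) \<Longrightarrow>
    (\<exists>c m. m \<in> C \<and> (\<forall>g\<in>C. g \<le> m) \<and> J z c {..<k} \<le> m \<and>
       (\<forall>j<k. z \<le> c j \<and> c j \<noteq> z \<and> inf (c j) (J z c {..<j}) = z))"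
proof (induction k arbitrary: C)
  case 0
  then obtain g where g: "C = {g}" by (metis card_1_singletonE One_nat_def)
  show ?case using g 0 by (intro exI[of _ "\<lambda>_. z"] exI[of _ g]) auto
next
  case (Suc k)
  obtain m where m: "m \<in> C" "\<forall>g\<in>C. g \<le> m" using chain_max[OF Suc.prems(2,3)] Suc.prems(4) by force
  define C' where "C' = C - {m}"
  have C': "C' \<subseteq> {z..u}" "is_chain C'" "finite C'" "card C' = Suc k"
    using Suc.prems m chain_subset[OF Suc.prems(2), of C'] unfolding C'_def by auto
  have compC': "\<forall>v\<in>C'. \<exists>c. z \<le> c \<and> c \<le> u \<and> inf c v = z \<and> sup c v = u"
    using Suc.prems(5) unfolding C'_def by blast
  obtain c m' where IH: "m' \<in> C'" "\<forall>g\<in>C'. g \<le> m'" "J z c {..<k} \<le> m'"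
    "\<forall>j<k. z \<le> c j \<and> c j \<noteq> z \<and> inf (c j) (J z c {..<j}) = z"
    using Suc.IH[OF C' compC'] by blast
  have m'm: "m' \<le> m" "m' \<noteq> m" "m' \<in> C" using IH(1) m unfolding C'_def by auto
  obtain y where y: "z \<le> y" "y \<le> u" "inf y m' = z" "sup y m' = u" using Suc.prems(5) m'm(3) by blast
  have zm: "z \<le> m" using m Suc.prems(1) by auto
  define cn where "cn = inf y m"
  define c2 where "c2 = c(k := cn)"
  have Jeq: "J z c2 {..<j} = J z c {..<j}" if "j \<le> k" for j
    unfolding c2_def using that by (intro J_cong) auto
  have cnm': "sup cn m' = m"
  proof -
    have "sup m' (inf y m) = inf (sup m' y) m" by (rule md[OF M m'm(1)])
    moreover have "m \<le> u" using Suc.prems(1) m(1) by auto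
    ultimately show ?thesis unfolding cn_def using y(4) by (simp add: sup_commute inf.absorb2)
  qed
  have zcn: "z \<le> cn" unfolding cn_def using y zm by simp
  have cnz: "cn \<noteq> z" using cnm' m'm IH zm
    by (metis C'(1) IH(1) atLeastAtMost_iff subsetD sup.absorb2)
  have cnJ: "inf cn (J z c {..<k}) = z"
  proof (rule order.antisym)
    have "inf cn (J z c {..<k}) \<le> inf cn m'" using IH(3) by (simp add: le_infI2)
    also have "\<dots> = inf y m'" unfolding cn_def using m'm(1) by (simp add: inf_assoc inf.absorb2)
    finally show "inf cn (J z c {..<k}) \<le> z" using y(3) by simp
    show "z \<le> inf cn (J z c {..<k})" using zcn J_ge_z[of "{..<k}" z c] by simp
  qed
  show ?case
  proof (intro exI[of _ c2] exI[of _ m] conjI)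
    show "m \<in> C" "\<forall>g\<in>C. g \<le> m" using m by auto
    have "J z c2 {..<Suc k} = sup cn (J z c {..<k})"
      using J_insert[of "{..<k}" z c2 k] Jeq[of k] by (simp add: lessThan_Suc c2_def)
    thus "J z c2 {..<Suc k} \<le> m" using IH(3) m'm(1) unfolding cn_def by (simp add: le_infI2)
  next
    show "\<forall>j<Suc k. z \<le> c2 j \<and> c2 j \<noteq> z \<and> inf (c2 j) (J z c2 {..<j}) = z"
    proof (intro allI impI)
    fix j assume j: "j < Suc k"
    show "z \<le> c2 j \<and> c2 j \<noteq> z \<and> inf (c2 j) (J z c2 {..<j}) = z"
    proof (cases "j = k")
      case True
      thus ?thesis using zcn cnz cnJ Jeq[of k] unfolding c2_def by simp
    next
      case False
      hence "j < k" using j by simp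
      thus ?thesis using IH(4) Jeq[of j] unfolding c2_def by simp
    qed
    qed
  qed
qed

lemma seq_indep:
  assumes "\<forall>j<(k::nat). (z::'a) \<le> c j \<and> inf (c j) (J z c {..<j}) = z"
  shows "\<forall>i<k. inf (c i) (J z c ({..<k} - {i})) = z"
  using assms
proof (induction k)
  case 0 then show ?case by simp
next
  case (Suc k)
  have IH: "\<forall>i<k. inf (c i) (J z c ({..<k} - {i})) = z" using Suc by simp
  show ?case
  proof (intro allI impI)
    fix i assume i: "i < Suc k"
    show "inf (c i) (J z c ({..<Suc k} - {i})) = z"
    proof (cases "i = k")
      case True
      hence "{..<Suc k} - {i} = {..<k}" by auto
      thus ?thesis using Suc.prems True by simp
    next
      case False
      hence ik: "i < k" using i by simp
      have s1: "{..<Suc k} - {i} = insert k ({..<k} - {i})" using ik by auto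
      have s2: "J z c {..<k} = sup (c i) (J z c ({..<k} - {i}))"
        using J_insert[of "{..<k} - {i}" z c i] ik by (simp add: insert_absorb)
      have "inf (c i) (sup (J z c ({..<k} - {i})) (c k)) = z"
      proof (rule indep_step[OF M])
        show "z \<le> c i" using Suc.prems ik by simp
        show "z \<le> J z c ({..<k} - {i})" by (simp add: J_ge_z)
        show "inf (c i) (J z c ({..<k} - {i})) = z" using IH ik by simp
        have "inf (c k) (J z c {..<k}) = z" using Suc.prems by simp
        thus "inf (sup (c i) (J z c ({..<k} - {i}))) (c k) = z"
          using s2 by (simp add: inf_commute)
      qed
      thus ?thesis unfolding s1 by (simp add: J_insert sup_commute)
    qed
  qed
qed

lemma chain_not_breadth:
  assumes zu: "(z::'a) \<le> u" and C: "C \<subseteq> {z..u}" "is_chain C" "finite C" "card C = Suc (Suc n)"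
    and comp: "\<forall>v\<in>C. \<exists>c. z \<le> c \<and> c \<le> u \<and> inf c v = z \<and> sup c v = u"
  shows "\<not> breadth_le TYPE('a) n"
proof -
  obtain c m where cm: "\<forall>j<Suc n. z \<le> c j \<and> c j \<noteq> z \<and> inf (c j) (J z c {..<j}) = z"
    using seq_build[OF zu C comp] by blast
  have ind: "\<forall>i<Suc n. inf (c i) (J z c ({..<Suc n} - {i})) = z"
    using seq_indep cm by blast
  have "irred z c {..<Suc n}" unfolding irred_def
  proof
    fix i assume i: "i \<in> {..<Suc n}"
    show "\<not> c i \<le> J z c ({..<Suc n} - {i})"
      using ind cm i by (metis inf.absorb1 lessThan_iff)
  qed
  thus ?thesis by (rule irred_not_breadth)
qed

end



context
  fixes dummy :: "'a::bounded_lattice itself"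
  assumes FL: "finite_length TYPE('a)"
begin

lemma star_fin:
  assumes st: "(s::'a) \<noteq> top"
  shows "\<exists>F. finite F \<and> (\<forall>f\<in>F. covers s f) \<and> star s = J s id F \<and> (\<forall>w. covers s w \<longrightarrow> w \<le> star s)"
proof -
  define T where "T = {w. covers s w}"
  have "{w. s < w} \<noteq> {}" using st top.not_eq_extremum by auto
  from fl_min[OF FL this] obtain t0 where t0: "s < t0" "\<forall>w. s < w \<longrightarrow> \<not> w < t0" by blast
  have t0T: "t0 \<in> T" unfolding T_def covers_def using t0 by blast
  define JJ where "JJ = {J s id F | F. finite F \<and> F \<subseteq> T}"
  have "J s id {} \<in> JJ" unfolding JJ_def by blast
  hence "JJ \<noteq> {}" by blast
  from fl_max[OF FL this] obtain g where g: "g \<in> JJ" "\<forall>w\<in>JJ. \<not> g < w" by blast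
  then obtain F0 where F0: "finite F0" "F0 \<subseteq> T" "g = J s id F0" unfolding JJ_def by blast
  have ub: "t \<le> g" if t: "t \<in> T" for t
  proof -
    have "J s id (insert t F0) \<in> JJ" unfolding JJ_def using F0 t by blast
    moreover have "g \<le> J s id (insert t F0)" using F0 by (simp add: J_mono subset_insertI)
    ultimately have "g = J s id (insert t F0)" using g(2) by (meson order.not_eq_order_implies_strict)
    moreover have "t \<le> J s id (insert t F0)" using J_ge_c[of "insert t F0" t id s] F0(1) by simp
    ultimately show ?thesis by simp
  qed
  have lub: "is_lub_in UNIV T g" unfolding is_lub_in_def
  proof (intro conjI ballI impI)
    show "g \<in> UNIV" by simp
    fix t assume "t \<in> T" thus "t \<le> g" by (rule ub)
  next
    fix y assume y: "y \<in> UNIV" "\<forall>t\<in>T. t \<le> y"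
    have "s \<le> y" using y t0T t0(1) by (meson less_imp_le order_trans)
    moreover have "\<forall>f\<in>F0. f \<le> y" using y F0(2) by blast
    ultimately show "g \<le> y" using F0 by (simp add: J_le_iff)
  qed
  have th: "(THE g'. is_lub_in UNIV T g') = g"
  proof (rule the_equality)
    show "is_lub_in UNIV T g" by (rule lub)
    fix g' assume "is_lub_in UNIV T g'"
    thus "g' = g" using lub unfolding is_lub_in_def by (meson UNIV_I order.antisym)
  qed
  have "star s = g" unfolding star_def using st th unfolding T_def by simp
  thus ?thesis using F0 ub unfolding T_def by (intro exI[of _ F0]) auto
qed

lemma max_atomistic_ex:
  assumes at: "atomistic (x::'a) x'"
  shows "\<exists>s b. max_atomistic s b \<and> {x..x'} \<subseteq> {s..b}"
proof -
  obtain N where N: "\<forall>C::'a set. is_chain C \<longrightarrow> finite C \<and> card C \<le> N+1"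
    using fl_bound[OF FL] by blast
  let ?P = "\<lambda>k. \<exists>c d C. atomistic c d \<and> {x..x'} \<subseteq> {c..d} \<and> C \<subseteq> {c..d} \<and> is_chain C \<and> finite C \<and> card C = k"
  have P0: "?P 0" using at by (intro exI[of _ x] exI[of _ x'] exI[of _ "{}"]) (auto simp: is_chain_def)
  have "\<forall>y. ?P y \<longrightarrow> y \<le> N+1" using N by blast
  from Nat.ex_has_greatest_nat[OF P0 this] obtain k c d C where
    cd: "atomistic c d" "{x..x'} \<subseteq> {c..d}" "C \<subseteq> {c..d}" "is_chain C" "finite C" "card C = k"
    and kmax: "\<forall>y. ?P y \<longrightarrow> y \<le> k" by blast
  have "max_atomistic c d" unfolding max_atomistic_def
  proof (intro conjI notI)
    show "atomistic c d" by (rule cd(1))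
    assume "\<exists>c' d'. atomistic c' d' \<and> {c..d} \<subset> {c'..d'}"
    then obtain c' d' where c'd': "atomistic c' d'" "{c..d} \<subset> {c'..d'}" by blast
    have cled: "c \<le> d" using cd(1) unfolding atomistic_def by simp
    have c'c: "c' \<le> c" and dd': "d \<le> d'" using c'd'(2) cled by auto
    have "\<exists>e. e \<in> {c'..d'} \<and> e \<notin> C \<and> is_chain (insert e C)"
    proof (cases "c' = c")
      case True
      hence "d \<noteq> d'" using c'd'(2) by auto
      hence dd'2: "d < d'" using dd' by simp
      have bd: "\<forall>b\<in>C. b \<le> d" using cd(3) by auto
      have "d' \<in> {c'..d'}" using c'c cled dd' by auto
      moreover have "d' \<notin> C" using bd dd'2 by fastforce
      moreover have "is_chain (insert d' C)" using cd(4) bd dd' by (intro chain_insert) (auto intro: order_trans)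
      ultimately show ?thesis by blast
    next
      case False
      hence cc'2: "c' < c" using c'c by simp
      have bc: "\<forall>b\<in>C. c \<le> b" using cd(3) by auto
      have "c' \<in> {c'..d'}" using c'c cled dd' by auto
      moreover have "c' \<notin> C" using bc cc'2 by fastforce
      moreover have "is_chain (insert c' C)" using cd(4) bc c'c by (intro chain_insert) (auto intro: order_trans)
      ultimately show ?thesis by blast
    qed
    then obtain e where e: "e \<in> {c'..d'}" "e \<notin> C" "is_chain (insert e C)" by blast
    have "?P (Suc k)" using c'd' cd e
      by (intro exI[of _ c'] exI[of _ d'] exI[of _ "insert e C"]) auto
    thus False using kmax by fastforce
  qed
  thus ?thesis using cd(2) by blast
qed

end



lemma chain0:
  fixes a :: "nat \<Rightarrow> 'a::lattice"
  assumes ir: "irred x a {..<Suc n}"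
  defines "C0 \<equiv> (\<lambda>k. J x a {..<k}) ` {..Suc n}"
  shows "C0 \<subseteq> (\<lambda>A. J x a A) ` Pow {..<Suc n}" "is_chain C0" "finite C0" "card C0 = Suc (Suc n)"
proof -
  show "C0 \<subseteq> (\<lambda>A. J x a A) ` Pow {..<Suc n}" unfolding C0_def by auto
  show "is_chain C0" unfolding C0_def is_chain_def
  proof (intro ballI)
    fix p q assume "p \<in> (\<lambda>k. J x a {..<k}) ` {..Suc n}" "q \<in> (\<lambda>k. J x a {..<k}) ` {..Suc n}"
    then obtain k l where "p = J x a {..<k}" "q = J x a {..<l}" by blast
    thus "p \<le> q \<or> q \<le> p" by (cases "k \<le> l") (auto intro!: J_mono)
  qed
  show "finite C0" unfolding C0_def by simp
  have "inj_on (\<lambda>k. J x a {..<k}) {..Suc n}"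
  proof (rule inj_onI)
    fix k l assume kl: "k \<in> {..Suc n}" "l \<in> {..Suc n}" "J x a {..<k} = J x a {..<l}"
    have "{..<k} \<subseteq> {..<l}" "{..<l} \<subseteq> {..<k}"
      using J_emb[OF _ ir, of "{..<k}" "{..<l}"] J_emb[OF _ ir, of "{..<l}" "{..<k}"] kl by auto
    thus "k = l" by (simp add: order.antisym)
  qed
  thus "card C0 = Suc (Suc n)" unfolding C0_def by (simp add: card_image)
qed

context
  fixes dummy :: "'a::bounded_lattice itself"
  assumes M: "modular_lattice TYPE('a)"
begin

lemma bool_sub:
  fixes a :: "nat \<Rightarrow> 'a"
  assumes cov: "\<forall>i\<in>{..<Suc n}. covers x (a i)" and ir: "irred x a {..<Suc n}"
  shows "compl_mod_sublattice ((\<lambda>A. J x a A) ` Pow {..<Suc n}) (n+1)"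
proof -
  define I where "I = {..<Suc n}"
  define S where "S = (\<lambda>A. J x a A) ` Pow I"
  have fI: "finite I" unfolding I_def by simp
  have meet: "inf (J x a A) (J x a B) = J x a (A \<inter> B)" if "A \<subseteq> I" "B \<subseteq> I" for A B
    using J_meet[OF M fI _ _ that] cov ir unfolding I_def by simp
  have join: "sup (J x a A) (J x a B) = J x a (A \<union> B)" if "A \<subseteq> I" "B \<subseteq> I" for A B
    using J_Un[of A B x a] that fI by (metis finite_subset)
  have closed: "\<forall>p\<in>S. \<forall>q\<in>S. inf p q \<in> S \<and> sup p q \<in> S"
    unfolding S_def using meet join by auto
  have modS: "\<forall>p\<in>S. \<forall>q\<in>S. \<forall>r\<in>S. p \<le> r \<longrightarrow> sup p (inf q r) = inf (sup p q) r"
    using modD[OF M] by blast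
  have bnd: "\<forall>p\<in>S. J x a {} \<le> p \<and> p \<le> J x a I"
    unfolding S_def using fI by (auto intro!: J_mono J_ge_z intro: finite_subset)
  have compl: "\<forall>p\<in>S. \<exists>q\<in>S. inf p q = J x a {} \<and> sup p q = J x a I"
  proof
    fix p assume "p \<in> S"
    then obtain A where A: "A \<subseteq> I" "p = J x a A" unfolding S_def by blast
    have "inf p (J x a (I - A)) = J x a {}" using meet[of A "I - A"] A by (simp add: Int_Diff)
    moreover have "sup p (J x a (I - A)) = J x a I" using join[of A "I - A"] A by (simp add: Un_Diff_cancel2 sup.absorb2 Un_absorb1)
    moreover have "J x a (I - A) \<in> S" unfolding S_def by auto
    ultimately show "\<exists>q\<in>S. inf p q = J x a {} \<and> sup p q = J x a I" by blast
  qed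
  have emb: "J x a A \<le> J x a B \<longleftrightarrow> A \<subseteq> B" if "A \<subseteq> I" "B \<subseteq> I" for A B
  proof -
    have "irred x a I" using ir unfolding I_def .
    thus ?thesis using J_emb[OF fI _ that] by blast
  qed
  have ll: "length_le S (n+1)" unfolding length_le_def
  proof (intro allI impI)
    fix C assume C: "C \<subseteq> S" "is_chain C"
    define AA where "AA = {A \<in> Pow I. J x a A \<in> C}"
    have CAA: "C = (\<lambda>A. J x a A) ` AA" unfolding AA_def using C(1) unfolding S_def by auto
    have fAA: "finite AA" unfolding AA_def using fI by simp
    have injc: "inj_on card AA"
    proof (rule inj_onI)
      fix A B assume AB: "A \<in> AA" "B \<in> AA" "card A = card B"
      have "J x a A \<le> J x a B \<or> J x a B \<le> J x a A" using C(2) AB unfolding AA_def is_chain_def by blast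
      hence "A \<subseteq> B \<or> B \<subseteq> A" using emb AB unfolding AA_def by auto
      moreover have "finite A" "finite B" using AB fI unfolding AA_def by (auto intro: finite_subset)
      ultimately show "A = B" using AB(3) card_subset_eq by metis
    qed
    have "card ` AA \<subseteq> {..Suc n}"
    proof
      fix k assume "k \<in> card ` AA"
      then obtain A where "A \<in> AA" "k = card A" by blast
      hence "k \<le> card I" using fI unfolding AA_def by (simp add: card_mono)
      thus "k \<in> {..Suc n}" unfolding I_def by simp
    qed
    hence "card (card ` AA) \<le> Suc (Suc n)" by (metis card_atMost card_mono finite_atMost)
    hence "card AA \<le> Suc (Suc n)" using card_image[OF injc] by simp
    moreover have "card C \<le> card AA" unfolding CAA by (rule card_image_le[OF fAA])
    ultimately show "finite C \<and> card C \<le> n + 1 + 1" using fAA CAA by simp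
  qed
  obtain C0 where "C0 \<subseteq> S" "is_chain C0" "finite C0" "card C0 = Suc (Suc n)"
    using chain0[OF ir] unfolding S_def I_def by blast
  hence "length_eq S (n+1)" using ll unfolding length_eq_def by auto
  moreover have "S \<noteq> {}" unfolding S_def by blast
  moreover have "J x a {} \<in> S" "J x a I \<in> S" unfolding S_def by (rule imageI, simp)+
  ultimately show ?thesis unfolding compl_mod_sublattice_def S_def[symmetric] I_def[symmetric]
    using closed modS bnd compl by blast
qed

end



theorem mainTheorem16:
  fixes n :: nat
  assumes "modular_lattice TYPE('a::bounded_lattice)"
    and "finite_length TYPE('a)"
    and "n \<ge> 1"
  shows "(breadth_le TYPE('a) n \<longleftrightarrow> \<not> (\<exists>S::'a set. compl_mod_sublattice S (n + 1)))
       \<and> (breadth_le TYPE('a) n \<longleftrightarrow> (\<forall>x\<in>(skeleton::'a set). length_le {x..star x} n))"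
proof -
  note M = assms(1) and FL = assms(2)
  have atoms: "\<exists>x (a::nat \<Rightarrow> 'a). (\<forall>i\<in>{..<Suc n}. covers x (a i)) \<and> irred x a {..<Suc n}"
    if nb: "\<not> breadth_le TYPE('a) n"
  proof -
    obtain c where "irred (bot::'a) c {..<Suc n}" using breadth_irred[OF nb] by blast
    from shrink[OF M FL _ this] show ?thesis by simp
  qed
  have pa: "\<exists>S::'a set. compl_mod_sublattice S (n+1)" if nb: "\<not> breadth_le TYPE('a) n"
    using atoms[OF nb] bool_sub[OF M] by blast
  have pb: "\<not> breadth_le TYPE('a) n" if S: "compl_mod_sublattice (S::'a set) (n+1)" for S
  proof -
    obtain z u where zu: "z \<in> S" "u \<in> S" "\<forall>p\<in>S. z \<le> p \<and> p \<le> u"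
      "\<forall>p\<in>S. \<exists>q\<in>S. inf p q = z \<and> sup p q = u"
      using S unfolding compl_mod_sublattice_def by blast
    obtain C where C: "C \<subseteq> S" "is_chain C" "finite C" "card C = Suc (Suc n)"
      using S unfolding compl_mod_sublattice_def length_eq_def by auto
    have zlu: "z \<le> u" using zu by blast
    have CS: "C \<subseteq> {z..u}" using C(1) zu(3) by auto
    have comp: "\<forall>v\<in>C. \<exists>c. z \<le> c \<and> c \<le> u \<and> inf c v = z \<and> sup c v = u"
    proof
      fix v assume "v \<in> C"
      then obtain q where q: "q \<in> S" "inf v q = z" "sup v q = u" using zu(4) C(1) by blast
      thus "\<exists>c. z \<le> c \<and> c \<le> u \<and> inf c v = z \<and> sup c v = u"
        using zu(3) by (intro exI[of _ q]) (simp add: inf_commute sup_commute)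
    qed
    show ?thesis by (rule chain_not_breadth[OF M zlu CS C(2,3,4) comp])
  qed
  have pc: "\<exists>s\<in>(skeleton::'a set). \<not> length_le {s..star s} n" if nb: "\<not> breadth_le TYPE('a) n"
  proof -
    obtain x and a :: "nat \<Rightarrow> 'a" where cov: "\<forall>i\<in>{..<Suc n}. covers x (a i)"
      and ir: "irred x a {..<Suc n}" using atoms[OF nb] by blast
    define x' where "x' = J x a {..<Suc n}"
    have "atomistic x x'" unfolding x'_def by (rule J_atomistic[OF M finite_lessThan cov])
    then obtain s b where sb: "max_atomistic s b" "{x..x'} \<subseteq> {s..b}"
      using max_atomistic_ex[OF FL] by blast
    have sk: "s \<in> skeleton" unfolding skeleton_def using sb(1) by blast
    have at: "atomistic s b" using sb(1) unfolding max_atomistic_def by blast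
    have bst: "b \<le> star s"
    proof (cases "s = top")
      case True thus ?thesis unfolding star_def by simp
    next
      case False
      obtain F where F: "finite F" "star s = J s id F" "\<forall>w. covers s w \<longrightarrow> w \<le> star s"
        using star_fin[OF FL False] by blast
      have sst: "s \<le> star s" using F J_ge_z by metis
      have sb': "s \<le> b" using at unfolding atomistic_def by blast
      have "b \<in> {s..b}" using sb' by simp
      then obtain A where A: "A \<subseteq> interval_atoms s b" "is_lub_in {s..b} A b"
        using at unfolding atomistic_def by blast
      have "inf (star s) b \<in> {s..b}" using sst sb' by simp
      moreover have "\<forall>w\<in>A. w \<le> inf (star s) b" using A(1) F(3) unfolding interval_atoms_def by auto
      ultimately have "b \<le> inf (star s) b" using A(2) unfolding is_lub_in_def by blast
      thus ?thesis by simp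
    qed
    define C0 where "C0 = (\<lambda>k. J x a {..<k}) ` {..Suc n}"
    have C0: "C0 \<subseteq> (\<lambda>A. J x a A) ` Pow {..<Suc n}" "is_chain C0" "finite C0" "card C0 = Suc (Suc n)"
      using chain0[OF ir] unfolding C0_def by blast+
    have "(\<lambda>A. J x a A) ` Pow {..<Suc n} \<subseteq> {x..x'}" unfolding x'_def
      by (auto intro!: J_mono J_ge_z intro: finite_subset[of _ "{..<Suc n}"])
    moreover have "{s..b} \<subseteq> {s..star s}" using bst by auto
    ultimately have C0s: "C0 \<subseteq> {s..star s}" using C0(1) sb(2) by (meson subset_trans)
    have "\<not> length_le {s..star s} n"
    proof
      assume "length_le {s..star s} n"
      hence "card C0 \<le> n+1" using C0s C0(2) unfolding length_le_def by blast
      thus False using C0(4) by simp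
    qed
    thus ?thesis using sk by blast
  qed
  have pd: "\<not> breadth_le TYPE('a) n" if sk: "s \<in> (skeleton::'a set)" and nl: "\<not> length_le {s..star s} n" for s
  proof -
    obtain C where C: "C \<subseteq> {s..star s}" "is_chain C" "\<not> (finite C \<and> card C \<le> n+1)"
      using nl unfolding length_le_def by blast
    have fC: "finite C" using FL C(2) unfolding finite_length_def length_le_def by blast
    hence cC: "Suc (Suc n) \<le> card C" using C(3) by simp
    obtain D where D: "D \<subseteq> C" "card D = Suc (Suc n)" "finite D"
      using obtain_subset_with_card_n[OF cC] by blast
    have st: "s \<noteq> top"
    proof
      assume "s = top"
      hence "C \<subseteq> {top}" using C(1) unfolding star_def by auto
      hence "card C \<le> card {top::'a}" by (intro card_mono) simp_all
      hence "card C \<le> 1" by simp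
      thus False using cC by simp
    qed
    obtain F where F: "finite F" "\<forall>f\<in>F. covers s f" "star s = J s id F"
      using star_fin[OF FL st] by blast
    have sst: "s \<le> star s" using F J_ge_z by metis
    have comp: "\<forall>v\<in>D. \<exists>c. s \<le> c \<and> c \<le> star s \<and> inf c v = s \<and> sup c v = star s"
    proof
      fix v assume "v \<in> D"
      hence "s \<le> v" "v \<le> J s id F" using D(1) C(1) F(3) by auto
      from J_compl[OF M F(1) _ this] F(2) F(3) show "\<exists>c. s \<le> c \<and> c \<le> star s \<and> inf c v = s \<and> sup c v = star s"
        by simp
    qed
    show ?thesis by (rule chain_not_breadth[OF M sst _ chain_subset[OF C(2) D(1)] D(3) D(2) comp])
      (use D(1) C(1) in blast)
  qed
  show ?thesis using pa pb pc pd by blast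
qed


end
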